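(* Let $\bm\mu=(\mu_1,\dots,\mu_r)$ be finite positive Borel measures on the unit circle with infinite supports, fix the square-root branch as in the context, let $\bm n\in\mathbb N^r$ be $\phi$-normal for $\bm\mu$ and $\tau\in\partial\mathbb D$. Let $X\not\equiv0$ be a $\tau$-invariant paraorthogonal function for $\bm n$ (see context). Suppose that for every $z_0\in\mathbb C$ with $z_0\neq0$ and $|z_0|\neq1$, the index $\bm n$ is also $\phi$-normal with respect to the system $(|z-z_0|^2d\mu_1(z),\dots,|z-z_0|^2d\mu_r(z))$. Then the polynomial $z^{(|\bm n|+1)/2}X(z)$ has degree $|\bm n|+1$ and all of its $|\bm n|+1$ zeros lie on the unit circle $\partial\mathbb D$.
   Context: $\partial\mathbb D=\{|z|=1\}$. Fix $t_0\in\mathbb R$ and let $z^{k/2}=|z|^{k/2}\exp(ik\arg_{[t_0,t_0+2\pi)}(z)/2)$, $k\in\mathbb Z$. $|\bm n|=\sum_j n_j$; $\operatorname{span}\{z^p\}_{p=a}^b$ ($b-a\in\mathbb Z$) is the span of $z^a,z^{a+1},\dots,z^b$. For a system $\bm\nu=(\nu_1,\dots,\nu_r)$ of measures on $\partial\mathbb D$, $\bm n$ is $\phi$-normal w.r.t. $\bm\nu$ if there is a unique $\phi\in\operatorname{span}\{z^p\}_{p=-|\bm n|/2}^{|\bm n|/2}$ with coefficient of $z^{|\bm n|/2}$ equal to $1$ such that $\int\phi(z)z^{-p}\,d\nu_j(z)=0$ for $p=-n_j/2,\dots,n_j/2-1$, $j=1,\dots,r$. A $\tau$-invariant paraorthogonal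 function for $\bm n$ is any $X\in\operatorname{span}\{z^p\}_{p=-(|\bm n|+1)/2}^{(|\bm n|+1)/2}$ with $X(z)=\tau\overline{X(1/\bar z)}$ and $\int X(z)z^{-p}\,d\mu_j(z)=0$ for $p=-(n_j-1)/2,\dots,(n_j-1)/2$, $j=1,\dots,r$. (For example, $z^{1/2}\phi_{\bm n}(z)+\tau z^{-1/2}\overline{\phi_{\bm n}(1/\bar z)}$.) Note $z^{(|\bm n|+1)/2}X(z)$ is a polynomial of degree at most $|\bm n|+1$; zeros of $X$ refer to zeros of this polynomial. *)

theory Defs
  imports "HOL-Analysis.Analysis" "HOL-Computational_Algebra.Polynomial"
begin

definition argb :: "real \<Rightarrow> complex \<Rightarrow> real" where
  "argb t0 z = t0 + ((Arg z - t0) - 2 * pi * of_int \<lfloor>(Arg z - t0) / (2 * pi)\<rfloor>)"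

text \<open>Half-integer power: hpow t0 k z is z^(k/2) = |z|^(k/2) exp(i k arg(z)/2)
  with the branch of arg in [t0, t0 + 2 pi).\<close>
definition hpow :: "real \<Rightarrow> int \<Rightarrow> complex \<Rightarrow> complex" where
  "hpow t0 k z = complex_of_real (cmod z powr (real_of_int k / 2)) *
                 exp (\<i> * complex_of_real (real_of_int k * argb t0 z / 2))"

text \<open>The function  sum_{j=0}^{N} c_j z^{(2j - N)/2}, an element of span{z^p}_{p=-N/2}^{N/2},
  whose coefficient of z^{N/2} is c N.\<close>
definition hsum :: "real \<Rightarrow> nat \<Rightarrow> (nat \<Rightarrow> complex) \<Rightarrow> complex \<Rightarrow> complex" where
  "hsum t0 N c = (\<lambda>z. \<Sum>j\<le>N. c j * hpow t0 (2 * int j - int N) z)"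

definition hspan :: "real \<Rightarrow> nat \<Rightarrow> (complex \<Rightarrow> complex) set" where
  "hspan t0 N = {f. \<exists>c. f = hsum t0 N c}"

definition nsize :: "nat \<Rightarrow> (nat \<Rightarrow> nat) \<Rightarrow> nat" where
  "nsize r n = (\<Sum>j<r. n j)"

text \<open>The orthogonality conditions p = -n_j/2, ..., n_j/2 - 1 are written p = (2k - n_j)/2,
  k = 0..n_j-1, so z^(-p) = hpow t0 (n_j - 2k).\<close>
definition phi_normal :: "real \<Rightarrow> nat \<Rightarrow> (nat \<Rightarrow> complex measure) \<Rightarrow> (nat \<Rightarrow> nat) \<Rightarrow> bool" where
  "phi_normal t0 r \<nu> n \<longleftrightarrow>
     (\<exists>!\<phi>. (\<exists>c. c (nsize r n) = 1 \<and> \<phi> = hsum t0 (nsize r n) c) \<and>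
            (\<forall>j<r. \<forall>k<n j. integral\<^sup>L (\<nu> j) (\<lambda>z. \<phi> z * hpow t0 (int (n j) - 2 * int k) z) = 0))"

text \<open>tau-invariant paraorthogonal function for n w.r.t. mu_0, ..., mu_{r-1}.
  Conditions p = -(n_j-1)/2, ..., (n_j-1)/2 are written p = (2k - n_j + 1)/2, k = 0..n_j-1.\<close>
definition paraorth :: "real \<Rightarrow> nat \<Rightarrow> (nat \<Rightarrow> complex measure) \<Rightarrow> (nat \<Rightarrow> nat) \<Rightarrow> complex
                        \<Rightarrow> (complex \<Rightarrow> complex) \<Rightarrow> bool" where
  "paraorth t0 r \<mu> n \<tau> X \<longleftrightarrow>
     X \<in> hspan t0 (nsize r n + 1) \<and>
     (\<forall>z. z \<noteq> 0 \<longrightarrow> X z = \<tau> * cnj (X (1 / cnj z))) \<and>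
     (\<forall>j<r. \<forall>k<n j. integral\<^sup>L (\<mu> j) (\<lambda>z. X z * hpow t0 (int (n j) - 1 - 2 * int k) z) = 0)"

definition msupport :: "complex measure \<Rightarrow> complex set" where
  "msupport M = {x. \<forall>e>0. emeasure M (ball x e) > 0}"

text \<open>Finite positive Borel measure on the unit circle (as a measure on C concentrated on |z| = 1).\<close>
definition circle_measure :: "complex measure \<Rightarrow> bool" where
  "circle_measure M \<longleftrightarrow> sets M = sets borel \<and> finite_measure M \<and>
                         emeasure M (UNIV - sphere 0 1) = 0"

end

theory Submission imports Defs begin

lemma Arg_meas: "Arg \<in> borel_measurable borel"
proof -
  have "(\<lambda>z. if z \<in> - \<real>\<^sub>\<le>\<^sub>0 then Arg z else (if z = 0 then 0 else pi)) \<in> borel_measurable borel"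
  proof (subst measurable_If_restrict_space_iff)
    show "{x \<in> space borel. x \<in> (- \<real>\<^sub>\<le>\<^sub>0 :: complex set)} \<in> sets borel"
    proof -
      have "{x \<in> space borel. x \<in> (- \<real>\<^sub>\<le>\<^sub>0 :: complex set)} = (- \<real>\<^sub>\<le>\<^sub>0 :: complex set)" by auto
      moreover have "open (- \<real>\<^sub>\<le>\<^sub>0 :: complex set)" by (simp add: open_Compl)
      hence "(- \<real>\<^sub>\<le>\<^sub>0 :: complex set) \<in> sets borel" by (rule borel_open)
      thus ?thesis by (simp add: Compl_eq)
    qed
    have 1: "Arg \<in> borel_measurable (restrict_space borel {x. x \<in> - \<real>\<^sub>\<le>\<^sub>0})"
    proof -
      have "{x. x \<in> - \<real>\<^sub>\<le>\<^sub>0} = (- \<real>\<^sub>\<le>\<^sub>0 :: complex set)" by auto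
      thus ?thesis using borel_measurable_continuous_on_restrict[OF continuous_on_Arg] by simp
    qed
    have "(\<lambda>z::complex. if z = 0 then 0 else pi) \<in> borel_measurable borel" by measurable
    hence 2: "(\<lambda>z::complex. if z = 0 then 0 else pi) \<in> borel_measurable (restrict_space borel {x. x \<notin> - \<real>\<^sub>\<le>\<^sub>0})"
      by (rule measurable_restrict_space1)
    show "Arg \<in> borel_measurable (restrict_space borel {x. x \<in> - \<real>\<^sub>\<le>\<^sub>0}) \<and>
      (\<lambda>z::complex. if z = 0 then 0 else pi) \<in> borel_measurable (restrict_space borel {x. x \<notin> - \<real>\<^sub>\<le>\<^sub>0})"
      by (rule conjI[OF 1 2])
  qed
  moreover have "(\<lambda>z. if z \<in> - \<real>\<^sub>\<le>\<^sub>0 then Arg z else (if z = 0 then 0 else pi)) = Arg"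
  proof
    fix z :: complex
    show "(if z \<in> - \<real>\<^sub>\<le>\<^sub>0 then Arg z else (if z = 0 then 0 else pi)) = Arg z"
      by (auto simp: Arg_zero nonpos_Reals_def Arg_of_real)
  qed
  ultimately show ?thesis by simp
qed

lemma argb_meas: "argb t0 \<in> borel_measurable borel"
  unfolding argb_def using Arg_meas by measurable

lemma hpow_meas: "hpow t0 k \<in> borel_measurable borel"
  unfolding hpow_def using argb_meas[of t0] by measurable

lemma hpow_mult: "hpow t0 a z * hpow t0 b z = hpow t0 (a+b) z"
  by (cases "z = 0") (simp_all add: hpow_def powr_add add_divide_distrib distrib_right distrib_left exp_add)

lemma hpow_0: "z \<noteq> 0 \<Longrightarrow> hpow t0 0 z = 1"
  by (simp add: hpow_def)

lemma hpow_nz: "z \<noteq> 0 \<Longrightarrow> hpow t0 k z \<noteq> 0"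
  by (simp add: hpow_def)

lemma hpow_norm: "cmod (hpow t0 k z) = cmod z powr (real_of_int k / 2)"
  by (simp add: hpow_def norm_mult)

lemma hpow_2: "hpow t0 2 z = z"
proof (cases "z = 0")
  case True thus ?thesis by (simp add: hpow_def)
next
  case False
  define m where "m = \<lfloor>(Arg z - t0) / (2 * pi)\<rfloor>"
  have a: "argb t0 z = Arg z + 2 * of_int (-m) * pi" unfolding argb_def m_def by simp
  have "exp (\<i> * complex_of_real (argb t0 z)) = exp (\<i> * Arg z) * exp ((2 * of_int (-m) * pi) * \<i>)"
    unfolding a by (simp add: exp_add[symmetric] algebra_simps)
  also have "exp ((2 * of_int (-m) * pi) * \<i>) = 1" by (rule exp_integer_2pi) simp
  finally have e: "exp (\<i> * complex_of_real (argb t0 z)) = exp (\<i> * Arg z)" by simp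
  show ?thesis unfolding hpow_def using e Arg_eq[OF False] by simp
qed

lemma hpow_even: "z \<noteq> 0 \<Longrightarrow> hpow t0 (2 * int m) z = z ^ m"
proof (induction m)
  case 0 thus ?case by (simp add: hpow_0)
next
  case (Suc m)
  have "hpow t0 (2 * int (Suc m)) z = hpow t0 (2 * int m) z * hpow t0 2 z"
    by (simp add: hpow_mult algebra_simps)
  thus ?case using Suc by (simp add: hpow_2)
qed

lemma hpow_refl: assumes "z \<noteq> 0" shows "cnj (hpow t0 k (1 / cnj z)) = hpow t0 (-k) z"
proof -
  have e: "1 / cnj z = z * of_real (1 / (cmod z)^2)"
    using assms by (simp add: complex_div_cnj[of 1 z] field_simps complex_norm_square[symmetric])
  have "Arg (1 / cnj z) = Arg z" unfolding e by (rule Arg_times_of_real2) (use assms in simp)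
  hence ab: "argb t0 (1 / cnj z) = argb t0 z" by (simp add: argb_def)
  have n: "cmod (1 / cnj z) = 1 / cmod z" by (simp add: norm_divide)
  have p: "(1 / cmod z) powr (real_of_int k / 2) = cmod z powr (real_of_int (-k) / 2)"
    using assms by (simp add: powr_divide powr_minus_divide)
  show ?thesis unfolding hpow_def ab n p by (simp add: exp_cnj)
qed

lemma hsum_0: "hsum t0 N c 0 = 0"
  by (simp add: hsum_def hpow_def)

declare hpow_meas[measurable]

lemma hsum_meas[measurable]: "hsum t0 N c \<in> borel_measurable borel"
  unfolding hsum_def by measurable

lemma circ_space: "circle_measure M \<Longrightarrow> space M = UNIV"
  unfolding circle_measure_def by (metis sets_eq_imp_space_eq space_borel)

lemma circ_meas: "circle_measure M \<Longrightarrow> f \<in> borel_measurable borel \<Longrightarrow> f \<in> borel_measurable M"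
  unfolding circle_measure_def by (metis measurable_cong_sets)

lemma circ_AE: assumes "circle_measure M" shows "AE z in M. cmod z = 1"
proof (rule AE_I')
  have "UNIV - sphere (0::complex) 1 \<in> sets borel" by (simp add: borel_open open_Diff)
  thus "UNIV - sphere (0::complex) 1 \<in> null_sets M"
    using assms unfolding circle_measure_def by (simp add: null_sets_def)
  show "{x \<in> space M. cmod x \<noteq> 1} \<subseteq> UNIV - sphere 0 1" by auto
qed

lemma circ_int:
  fixes f :: "complex \<Rightarrow> 'b::{banach,second_countable_topology}"
  assumes M: "circle_measure M" and f: "f \<in> borel_measurable borel"
    and B: "\<And>z. cmod z = 1 \<Longrightarrow> norm (f z) \<le> B"
  shows "integrable M f"
proof -
  interpret finite_measure M using M unfolding circle_measure_def by auto
  show ?thesis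
  proof (rule integrable_const_bound)
    show "AE x in M. norm (f x) \<le> B" using circ_AE[OF M] by eventually_elim (rule B)
    show "f \<in> borel_measurable M" by (rule circ_meas[OF M f])
  qed
qed

lemma hsum_bound: assumes "cmod z = 1"
  shows "norm (hsum t0 N c z * hpow t0 m z) \<le> (\<Sum>j\<le>N. cmod (c j))"
proof -
  have h: "\<And>k. cmod (hpow t0 k z) = 1" using assms by (simp add: hpow_norm)
  have "norm (hsum t0 N c z) \<le> (\<Sum>j\<le>N. cmod (c j * hpow t0 (2 * int j - int N) z))"
    unfolding hsum_def by (rule norm_sum)
  also have "\<dots> = (\<Sum>j\<le>N. cmod (c j))" by (simp add: norm_mult h)
  finally show ?thesis by (simp add: norm_mult h)
qed

lemma L:
  assumes normal: "phi_normal t0 r \<nu> n"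
    and integ: "\<And>j c m. j < r \<Longrightarrow> integrable (\<nu> j) (\<lambda>z. hsum t0 (nsize r n) c z * hpow t0 m z)"
    and dN: "d (nsize r n) = 0"
    and orth: "\<And>j k. j < r \<Longrightarrow> k < n j \<Longrightarrow>
       integral\<^sup>L (\<nu> j) (\<lambda>z. hsum t0 (nsize r n) d z * hpow t0 (int (n j) - 2 * int k) z) = 0"
  shows "hsum t0 (nsize r n) d z = 0"
proof -
  define N where "N = nsize r n"
  define Pr where "Pr = (\<lambda>\<phi>. (\<exists>c. c N = 1 \<and> \<phi> = hsum t0 N c) \<and>
            (\<forall>j<r. \<forall>k<n j. integral\<^sup>L (\<nu> j) (\<lambda>z. \<phi> z * hpow t0 (int (n j) - 2 * int k) z) = 0))"
  have "\<exists>!\<phi>. Pr \<phi>" using normal unfolding phi_normal_def Pr_def N_def .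
  then obtain \<phi> where ex: "Pr \<phi>" and uniq: "\<And>\<psi>. Pr \<psi> \<Longrightarrow> \<psi> = \<phi>" by auto
  from ex obtain c where c: "c N = 1" "\<phi> = hsum t0 N c" unfolding Pr_def by auto
  define e where "e i = c i + d i" for i
  have hs: "hsum t0 N e = (\<lambda>z. hsum t0 N c z + hsum t0 N d z)"
    by (auto simp: hsum_def e_def sum.distrib distrib_right fun_eq_iff)
  have "Pr (hsum t0 N e)"
    unfolding Pr_def
  proof (intro conjI allI impI)
    show "\<exists>c. c N = 1 \<and> hsum t0 N e = hsum t0 N c" using c dN unfolding N_def by (intro exI[of _ e]) (simp add: e_def)
    fix j k assume j: "j < r" and k: "k < n j"
    have "integral\<^sup>L (\<nu> j) (\<lambda>z. hsum t0 N e z * hpow t0 (int (n j) - 2 * int k) z)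
        = integral\<^sup>L (\<nu> j) (\<lambda>z. hsum t0 N c z * hpow t0 (int (n j) - 2 * int k) z
              + hsum t0 N d z * hpow t0 (int (n j) - 2 * int k) z)"
      unfolding hs by (simp add: distrib_right)
    also have "\<dots> = integral\<^sup>L (\<nu> j) (\<lambda>z. hsum t0 N c z * hpow t0 (int (n j) - 2 * int k) z)
         + integral\<^sup>L (\<nu> j) (\<lambda>z. hsum t0 N d z * hpow t0 (int (n j) - 2 * int k) z)"
      by (rule Bochner_Integration.integral_add) (use integ j N_def in auto)
    also have "\<dots> = 0" using ex j k orth[OF j k] unfolding Pr_def c(2) N_def by auto
    finally show "integral\<^sup>L (\<nu> j) (\<lambda>z. hsum t0 N e z * hpow t0 (int (n j) - 2 * int k) z) = 0" .
  qed
  hence "hsum t0 N e = hsum t0 N c" using uniq c by auto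
  hence "hsum t0 N e z = hsum t0 N c z" by simp
  hence "hsum t0 N c z + hsum t0 N d z = hsum t0 N c z" using hs by metis
  thus ?thesis unfolding N_def by simp
qed

lemma polyeq: assumes "\<And>z. z \<noteq> 0 \<Longrightarrow> poly p z = poly q z" shows "p = (q::complex poly)"
proof (rule ccontr)
  assume "p \<noteq> q"
  hence "p - q \<noteq> 0" by simp
  hence fin: "finite {z. poly (p - q) z = 0}" by (rule poly_roots_finite)
  have "UNIV - {0} \<subseteq> {z. poly (p - q) z = 0}" using assms by auto
  hence "finite (UNIV - {0::complex})" using fin finite_subset by blast
  thus False by (simp add: infinite_UNIV_char_0)
qed

lemma keyid: assumes "cmod z = 1" "z0 \<noteq> 0"
  shows "complex_of_real ((cmod (z - z0))\<^sup>2) * z = - cnj z0 * (z - z0) * (z - 1 / cnj z0)"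
proof -
  have zz: "cnj z * z = 1" using complex_norm_square[of z] assms(1) by (simp add: mult.commute)
  have "complex_of_real ((cmod (z - z0))\<^sup>2) * z = (z - z0) * (cnj z * z - cnj z0 * z)"
    unfolding complex_norm_square by (simp add: algebra_simps)
  also have "\<dots> = (z - z0) * (1 - cnj z0 * z)" by (simp add: zz)
  also have "\<dots> = - cnj z0 * (z - z0) * (z - 1 / cnj z0)"
    using assms(2) by (simp add: field_simps)
  finally show ?thesis .
qed


theorem theorem4p1:
  fixes t0 :: real and r :: nat and \<mu> :: "nat \<Rightarrow> complex measure"
    and n :: "nat \<Rightarrow> nat" and \<tau> :: complex and X :: "complex \<Rightarrow> complex"
  assumes meas: "\<And>j. j < r \<Longrightarrow> circle_measure (\<mu> j)"
    and supp: "\<And>j. j < r \<Longrightarrow> infinite (msupport (\<mu> j))"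
    and normal: "phi_normal t0 r \<mu> n"
    and tau: "cmod \<tau> = 1"
    and para: "paraorth t0 r \<mu> n \<tau> X"
    and nonzero: "X \<noteq> (\<lambda>z. 0)"
    and normal_mod: "\<And>z0. z0 \<noteq> 0 \<Longrightarrow> cmod z0 \<noteq> 1 \<Longrightarrow>
        phi_normal t0 r (\<lambda>j. density (\<mu> j) (\<lambda>z. ennreal ((cmod (z - z0))\<^sup>2))) n"
  shows "\<exists>P :: complex poly.
           (\<forall>z. z \<noteq> 0 \<longrightarrow> hpow t0 (int (nsize r n) + 1) z * X z = poly P z) \<and>
           degree P = nsize r n + 1 \<and>
           (\<forall>z. poly P z = 0 \<longrightarrow> cmod z = 1)"
proof -
  define N where "N = nsize r n"
  from para obtain c where Xc: "X = hsum t0 (N+1) c"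
    and inv: "\<And>z. z \<noteq> 0 \<Longrightarrow> X z = \<tau> * cnj (X (1 / cnj z))"
    and orthX: "\<And>j k. j < r \<Longrightarrow> k < n j \<Longrightarrow>
        integral\<^sup>L (\<mu> j) (\<lambda>z. X z * hpow t0 (int (n j) - 1 - 2 * int k) z) = 0"
    unfolding paraorth_def hspan_def N_def by auto
  have X0: "X 0 = 0" unfolding Xc by (rule hsum_0)
  define P where "P = (\<Sum>j\<le>N+1. monom (c j) j)"
  have coeffP: "coeff P i = (if i \<le> N+1 then c i else 0)" for i
    unfolding P_def by (simp add: coeff_sum coeff_monom)
  have E: "hpow t0 (int N + 1) z * X z = poly P z" if z: "z \<noteq> 0" for z
  proof -
    have "hpow t0 (int N + 1) z * X z = (\<Sum>j\<le>N+1. c j * (hpow t0 (int N + 1) z * hpow t0 (2 * int j - int (N+1)) z))"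
      unfolding Xc hsum_def by (simp add: sum_distrib_left algebra_simps)
    also have "\<dots> = (\<Sum>j\<le>N+1. c j * z ^ j)"
      by (intro sum.cong refl) (simp add: hpow_mult hpow_even[OF z])
    also have "\<dots> = poly P z" unfolding P_def by (simp add: poly_sum poly_monom)
    finally show ?thesis .
  qed
  have Xp: "X z = hpow t0 (- (int N + 1)) z * poly P z" if z: "z \<noteq> 0" for z
  proof -
    have "hpow t0 (- (int N + 1)) z * poly P z = hpow t0 (- (int N + 1)) z * hpow t0 (int N + 1) z * X z"
      using E[OF z] by simp
    also have "\<dots> = X z" by (simp add: hpow_mult hpow_0[OF z])
    finally show ?thesis by simp
  qed
  define Q where "Q = (\<Sum>j\<le>N+1. monom (cnj (c j)) (N+1-j))"
  have PQ: "poly P z = poly (smult \<tau> Q) z" if z: "z \<noteq> 0" for z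
  proof -
    have z': "1 / cnj z \<noteq> 0" using z by simp
    have "cnj (X (1 / cnj z)) = (\<Sum>j\<le>N+1. cnj (c j) * hpow t0 (- (2 * int j - int (N+1))) z)"
      unfolding Xc hsum_def by (simp add: hpow_refl[OF z])
    hence "poly P z = \<tau> * (\<Sum>j\<le>N+1. cnj (c j) * (hpow t0 (int N + 1) z * hpow t0 (- (2 * int j - int (N+1))) z))"
      using E[OF z] inv[OF z] by (simp add: sum_distrib_left algebra_simps)
    also have "(\<Sum>j\<le>N+1. cnj (c j) * (hpow t0 (int N + 1) z * hpow t0 (- (2 * int j - int (N+1))) z))
        = (\<Sum>j\<le>N+1. cnj (c j) * z ^ (N+1-j))"
    proof (intro sum.cong refl)
      fix j assume "j \<in> {..N+1}"
      hence e: "int N + 1 + - (2 * int j - int (N + 1)) = 2 * int (N+1-j)" by auto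
      have "hpow t0 (int N + 1) z * hpow t0 (- (2 * int j - int (N+1))) z = hpow t0 (2 * int (N+1-j)) z"
        unfolding hpow_mult e ..
      thus "cnj (c j) * (hpow t0 (int N + 1) z * hpow t0 (- (2 * int j - int (N+1))) z) = cnj (c j) * z ^ (N+1-j)"
        by (simp add: hpow_even[OF z])
    qed
    also have "\<dots> = poly Q z" unfolding Q_def by (simp add: poly_sum poly_monom)
    finally show ?thesis by simp
  qed
  have PQ': "P = smult \<tau> Q" by (rule polyeq) (rule PQ)
  have cQ0: "coeff Q 0 = cnj (c (N+1))"
  proof -
    have "coeff Q 0 = (\<Sum>j\<le>N+1. if j = N+1 then cnj (c j) else 0)"
      unfolding Q_def coeff_sum by (intro sum.cong refl) (auto simp: coeff_monom)
    also have "\<dots> = cnj (c (N+1))" by simp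
    finally show ?thesis .
  qed
  have c0: "c 0 = \<tau> * cnj (c (N+1))"
    using arg_cong[OF PQ', of "\<lambda>p. coeff p 0"] coeffP[of 0] cQ0 by simp
  have hint: "integrable (\<mu> j) (\<lambda>z. hsum t0 N d z * hpow t0 m z)" if j: "j < r" for j d m
    by (rule circ_int[OF meas[OF j] _ hsum_bound]) measurable
  have cN: "c (N+1) \<noteq> 0"
  proof
    assume cN0: "c (N+1) = 0"
    hence cz: "c 0 = 0" using c0 by simp
    define d where "d i = c (Suc i)" for i
    have Y: "hsum t0 N d z = hpow t0 (-1) z * X z" for z
    proof -
      have "hpow t0 (-1) z * X z = (\<Sum>j\<le>Suc N. c j * (hpow t0 (-1) z * hpow t0 (2 * int j - int (N+1)) z))"
        unfolding Xc hsum_def by (simp add: sum_distrib_left algebra_simps)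
      also have "\<dots> = (\<Sum>i\<le>N. c (Suc i) * (hpow t0 (-1) z * hpow t0 (2 * int (Suc i) - int (N+1)) z))"
        by (subst sum.atMost_Suc_shift) (simp add: cz)
      also have "\<dots> = hsum t0 N d z"
        unfolding hsum_def d_def by (intro sum.cong refl) (simp add: hpow_mult algebra_simps)
      finally show ?thesis by simp
    qed
    have Y0: "hsum t0 N d z = 0" for z
      unfolding N_def
    proof (rule L[OF normal])
      show "\<And>j c m. j < r \<Longrightarrow> integrable (\<mu> j) (\<lambda>z. hsum t0 (nsize r n) c z * hpow t0 m z)"
        using hint unfolding N_def by blast
      show "d (nsize r n) = 0" using cN0 unfolding d_def N_def by simp
      fix j k assume j: "j < r" and k: "k < n j"
      have "integral\<^sup>L (\<mu> j) (\<lambda>z. hsum t0 N d z * hpow t0 (int (n j) - 2 * int k) z)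
          = integral\<^sup>L (\<mu> j) (\<lambda>z. X z * hpow t0 (int (n j) - 1 - 2 * int k) z)"
      proof (intro Bochner_Integration.integral_cong refl)
        fix z
        have "hpow t0 (-1) z * hpow t0 (int (n j) - 2 * int k) z = hpow t0 (int (n j) - 1 - 2 * int k) z"
          by (simp add: hpow_mult algebra_simps)
        thus "hsum t0 N d z * hpow t0 (int (n j) - 2 * int k) z = X z * hpow t0 (int (n j) - 1 - 2 * int k) z"
          unfolding Y by (metis mult.assoc mult.commute)
      qed
      thus "integral\<^sup>L (\<mu> j) (\<lambda>z. hsum t0 (nsize r n) d z * hpow t0 (int (n j) - 2 * int k) z) = 0"
        using orthX[OF j k] unfolding N_def by simp
    qed
    have "X = (\<lambda>z. 0)"
    proof
      fix z show "X z = 0"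
      proof (cases "z = 0")
        case True thus ?thesis using X0 by simp
      next
        case False thus ?thesis using Y0[of z] Y[of z] hpow_nz[OF False, of t0 "-1"] by simp
      qed
    qed
    thus False using nonzero by simp
  qed
  have degP: "degree P = N + 1"
  proof (rule antisym)
    show "degree P \<le> N + 1" by (rule degree_le) (simp add: coeffP)
    show "N + 1 \<le> degree P" by (rule le_degree) (use cN in \<open>simp add: coeffP\<close>)
  qed
  have tnz: "\<tau> \<noteq> 0" using tau by auto
  have P0: "poly P 0 \<noteq> 0" using c0 cN tnz by (simp add: poly_0_coeff_0 coeffP)
  have roots: "cmod z0 = 1" if root: "poly P z0 = 0" for z0
  proof (rule ccontr)
    assume nm: "cmod z0 \<noteq> 1"
    have z0: "z0 \<noteq> 0" using P0 root by auto
    define w where "w = 1 / cnj z0"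
    have w0: "w \<noteq> 0" using z0 by (simp add: w_def)
    have ww: "1 / cnj w = z0" by (simp add: w_def)
    have rw: "poly P w = 0"
    proof -
      have "X z0 = 0" using Xp[OF z0] root by simp
      hence "X w = 0" using inv[OF w0] ww by simp
      thus ?thesis using E[OF w0] by simp
    qed
    have wz: "w \<noteq> z0"
    proof
      assume "w = z0"
      hence "z0 * cnj z0 = 1" using z0 by (simp add: w_def field_simps)
      hence "complex_of_real ((cmod z0)^2) = 1" unfolding complex_norm_square .
      hence "(cmod z0)^2 = 1" by (metis of_real_eq_1_iff)
      hence "cmod z0 = 1" by (smt (verit) norm_ge_zero power2_eq_1_iff)
      thus False using nm by simp
    qed
    obtain P1 where P1: "P = [:-z0, 1:] * P1" using root by (metis dvd_def poly_eq_0_iff_dvd)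
    have "poly P1 w = 0" using rw wz unfolding P1 by simp
    then obtain R where R: "P1 = [:-w, 1:] * R" by (metis dvd_def poly_eq_0_iff_dvd)
    have PR: "P = [:-z0, 1:] * ([:-w, 1:] * R)" using P1 R by simp
    have Pnz: "P \<noteq> 0" using degP by auto
    hence Rnz: "R \<noteq> 0" using PR by auto
    have d1: "degree ([:-w, 1:] * R) = 1 + degree R" by (subst degree_mult_eq) (use Rnz in auto)
    have nz2: "[:-w, 1:] * R \<noteq> 0" using Rnz by (simp only: mult_eq_0_iff) simp
    have "degree P = 1 + degree ([:-w, 1:] * R)" unfolding PR by (subst degree_mult_eq) (use nz2 in auto)
    hence "degree P = 2 + degree R" using d1 by simp
    hence dR: "degree R + 1 = N" using degP by simp
    have cRN: "coeff R N = 0" using dR by (simp add: coeff_eq_0)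
    have Yz: "hsum t0 N (coeff R) z = hpow t0 (- int N) z * poly R z" if z: "z \<noteq> 0" for z
    proof -
      have "poly R z = poly (\<Sum>i\<le>N. monom (coeff R i) i) z"
        using poly_as_sum_of_monoms'[of R N] dR by simp
      hence "hpow t0 (- int N) z * poly R z = (\<Sum>i\<le>N. coeff R i * (hpow t0 (- int N) z * z ^ i))"
        by (simp add: poly_sum poly_monom sum_distrib_left algebra_simps)
      also have "\<dots> = hsum t0 N (coeff R) z"
        unfolding hsum_def
      proof (intro sum.cong refl)
        fix i
        have "hpow t0 (- int N) z * z ^ i = hpow t0 (- int N) z * hpow t0 (2 * int i) z"
          by (simp add: hpow_even[OF z])
        also have "\<dots> = hpow t0 (2 * int i - int N) z" by (simp add: hpow_mult)
        finally show "coeff R i * (hpow t0 (- int N) z * z ^ i) = coeff R i * hpow t0 (2 * int i - int N) z"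
          by simp
      qed
      finally show ?thesis by simp
    qed
    define g where "g z = (cmod (z - z0))\<^sup>2" for z
    have gm[measurable]: "g \<in> borel_measurable borel" unfolding g_def by measurable
    have Y0: "hsum t0 N (coeff R) z = 0" for z
      unfolding N_def
    proof (rule L[OF normal_mod[OF z0 nm]])
      fix j c m assume j: "j < r"
      have gM: "g \<in> borel_measurable (\<mu> j)" by (rule circ_meas[OF meas[OF j] gm])
      have fM: "(\<lambda>z. hsum t0 (nsize r n) c z * hpow t0 m z) \<in> borel_measurable (\<mu> j)"
        by (rule circ_meas[OF meas[OF j]]) measurable
      have "integrable (\<mu> j) (\<lambda>z. g z *\<^sub>R (hsum t0 (nsize r n) c z * hpow t0 m z))"
      proof (rule circ_int[OF meas[OF j]])
        show "(\<lambda>z. g z *\<^sub>R (hsum t0 (nsize r n) c z * hpow t0 m z)) \<in> borel_measurable borel"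
          by measurable
        fix z :: complex assume z: "cmod z = 1"
        have "g z \<le> (1 + cmod z0)^2" unfolding g_def
          using norm_triangle_ineq4[of z z0] z by (intro power_mono) auto
        moreover have "norm (hsum t0 (nsize r n) c z * hpow t0 m z) \<le> (\<Sum>i\<le>nsize r n. cmod (c i))"
          by (rule hsum_bound[OF z])
        ultimately show "norm (g z *\<^sub>R (hsum t0 (nsize r n) c z * hpow t0 m z))
            \<le> (1 + cmod z0)^2 * (\<Sum>i\<le>nsize r n. cmod (c i))"
          by (simp add: g_def mult_mono)
      qed
      thus "integrable (density (\<mu> j) (\<lambda>z. ennreal ((cmod (z - z0))\<^sup>2)))
               (\<lambda>z. hsum t0 (nsize r n) c z * hpow t0 m z)"
        using integrable_density[OF fM gM] unfolding g_def by simp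
    next
      show "coeff R (nsize r n) = 0" using cRN unfolding N_def .
    next
      fix j k assume j: "j < r" and k: "k < n j"
      have gM: "g \<in> borel_measurable (\<mu> j)" by (rule circ_meas[OF meas[OF j] gm])
      have fM: "(\<lambda>z. hsum t0 N (coeff R) z * hpow t0 (int (n j) - 2 * int k) z) \<in> borel_measurable (\<mu> j)"
        by (rule circ_meas[OF meas[OF j]]) measurable
      have "integral\<^sup>L (density (\<mu> j) g) (\<lambda>z. hsum t0 N (coeff R) z * hpow t0 (int (n j) - 2 * int k) z)
          = integral\<^sup>L (\<mu> j) (\<lambda>z. g z *\<^sub>R (hsum t0 N (coeff R) z * hpow t0 (int (n j) - 2 * int k) z))"
        by (rule integral_density[OF fM gM]) (simp add: g_def)
      also have "\<dots> = integral\<^sup>L (\<mu> j) (\<lambda>z. - cnj z0 * (X z * hpow t0 (int (n j) - 1 - 2 * int k) z))"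
      proof (rule integral_cong_AE)
        show "(\<lambda>z. g z *\<^sub>R (hsum t0 N (coeff R) z * hpow t0 (int (n j) - 2 * int k) z)) \<in> borel_measurable (\<mu> j)"
          by (rule circ_meas[OF meas[OF j]]) measurable
        have "(\<lambda>z. - cnj z0 * (X z * hpow t0 (int (n j) - 1 - 2 * int k) z)) \<in> borel_measurable borel"
          unfolding Xc by measurable
        thus "(\<lambda>z. - cnj z0 * (X z * hpow t0 (int (n j) - 1 - 2 * int k) z)) \<in> borel_measurable (\<mu> j)"
          by (rule circ_meas[OF meas[OF j]])
        show "AE z in \<mu> j. g z *\<^sub>R (hsum t0 N (coeff R) z * hpow t0 (int (n j) - 2 * int k) z)
                 = - cnj z0 * (X z * hpow t0 (int (n j) - 1 - 2 * int k) z)"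
          using circ_AE[OF meas[OF j]]
        proof eventually_elim
          fix z :: complex assume z1: "cmod z = 1"
          hence z: "z \<noteq> 0" by auto
          define a where "a = hpow t0 (- (int N + 1)) z"
          define b where "b = hpow t0 1 z"
          define h where "h = hpow t0 (int (n j) - 1 - 2 * int k) z"
          have e1: "hpow t0 (- int N) z = a * b" unfolding a_def b_def by (simp add: hpow_mult)
          have e2: "hpow t0 (int (n j) - 2 * int k) z = b * h" unfolding h_def b_def by (simp add: hpow_mult)
          have e3: "b * b = z" unfolding b_def using hpow_2[of t0 z] by (simp add: hpow_mult)
          have e4: "X z = a * ((z - z0) * ((z - w) * poly R z))" unfolding a_def using Xp[OF z] PR by (simp add: algebra_simps)
          have K: "complex_of_real (g z) * z = - cnj z0 * (z - z0) * (z - w)"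
            unfolding g_def w_def by (rule keyid[OF z1 z0])
          have "g z *\<^sub>R (hsum t0 N (coeff R) z * hpow t0 (int (n j) - 2 * int k) z)
              = (complex_of_real (g z) * (b * b)) * a * poly R z * h"
            unfolding Yz[OF z] e1 e2 scaleR_conv_of_real by (simp add: algebra_simps)
          also have "\<dots> = - cnj z0 * (X z * h)" unfolding e3 K e4 by (simp add: algebra_simps)
          finally show "g z *\<^sub>R (hsum t0 N (coeff R) z * hpow t0 (int (n j) - 2 * int k) z)
                 = - cnj z0 * (X z * hpow t0 (int (n j) - 1 - 2 * int k) z)" unfolding h_def .
        qed
      qed
      also have "\<dots> = - cnj z0 * integral\<^sup>L (\<mu> j) (\<lambda>z. X z * hpow t0 (int (n j) - 1 - 2 * int k) z)"
        by (rule integral_mult_right_zero)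
      also have "\<dots> = 0" using orthX[OF j k] by simp
      finally show "integral\<^sup>L (density (\<mu> j) (\<lambda>z. ennreal ((cmod (z - z0))\<^sup>2)))
          (\<lambda>z. hsum t0 (nsize r n) (coeff R) z * hpow t0 (int (n j) - 2 * int k) z) = 0"
        unfolding g_def N_def by simp
    qed
    have "R = 0"
    proof (rule polyeq)
      fix z :: complex assume z: "z \<noteq> 0"
      show "poly R z = poly 0 z" using Y0[of z] Yz[OF z] hpow_nz[OF z] by simp
    qed
    thus False using Rnz by simp
  qed
  show ?thesis
  proof (intro exI[of _ P] conjI allI impI)
    fix z :: complex assume "z \<noteq> 0"
    thus "hpow t0 (int (nsize r n) + 1) z * X z = poly P z" using E unfolding N_def by simp
  next
    show "degree P = nsize r n + 1" using degP unfolding N_def .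
  next
    fix z assume "poly P z = 0" thus "cmod z = 1" by (rule roots)
  qed
qed

end
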